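(* For all $p\in(0,1)$ and $n\ge0$, $\mathbb P^{\mathrm{aon}}_p[o\rightsquigarrow\partial B_{n+1}]=\mathbb P''_p[o\leftrightsquigarrow\partial B_n]$. Consequently $\mathbb P''_p[o\leftrightsquigarrow\infty]=\mathbb P^{\mathrm{aon}}_p[o\rightsquigarrow\infty]\le \mathbb P_p[o\rightsquigarrow\infty]=\mathbb P'_p[o\leftrightsquigarrow\infty]$.
   Context: On $\mathbb Z^d$, $B_n=\{x:\|x\|_1\le n\}$, $\partial B_n=B_{n+1}\setminus B_n$. $\mathbb P^{\mathrm{aon}}_p$: independently, each vertex $u$ opens directed edges to all its $2d$ nearest neighbors with probability $p$ and to none with probability $1-p$. $\mathbb P_p$: each directed nearest-neighbor edge is open independently with probability $p$. For these directed models, $\{o\rightsquigarrow\partial B_n\}$ is the event that a path of open directed edges leads from $o$ to $\partial B_n$, and $\{o\rightsquigarrow\infty\}$ the event that infinitely many vertices are reachable from $o$ by such paths. $\mathbb P''_p$ is i.i.d. site percolation (each vertex open independently with probability $p$); under it $\{o\leftrightsquigarrow\partial B_n\}$ is the event that there is a nearest-neighbor path from $o$ to a vertex of $\partial B_n$ all of whose vertices (including $o$ and the endpoint) are open, and $\{o\leftrightsquigarrow\infty\}$ that the open cluster of $o$ is infinite. $\mathbb P'_p$ is undirected Bernoulli bond percolation with parameter $p$ and $\{o\leftrightsquigarrow\infty\}$ the event that the open cluster of $o$ is infinite. *)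

theory Defs
  imports "HOL-Probability.Probability"
begin

text \<open>Vertices of Z^d are vectors int ^ 'd, d = CARD('d) \<ge> 1.\<close>

definition norm1 :: "int ^ 'd \<Rightarrow> int" where
  "norm1 x = (\<Sum>i\<in>UNIV. \<bar>x $ i\<bar>)"

definition adj :: "int ^ 'd \<Rightarrow> int ^ 'd \<Rightarrow> bool" where
  "adj u v \<longleftrightarrow> norm1 (u - v) = 1"

definition ball1 :: "nat \<Rightarrow> (int ^ 'd) set" where
  "ball1 n = {x. norm1 x \<le> int n}"

definition bdry :: "nat \<Rightarrow> (int ^ 'd) set" where
  "bdry n = ball1 (Suc n) - ball1 n"

text \<open>Site percolation / all-or-none: one Bernoulli(p) variable per vertex.\<close>
definition vertex_ps :: "real \<Rightarrow> (int ^ 'd \<Rightarrow> bool) measure" where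
  "vertex_ps p = PiM UNIV (\<lambda>_. measure_pmf (bernoulli_pmf p))"

definition dir_bond_ps :: "real \<Rightarrow> ((int ^ 'd) \<times> (int ^ 'd) \<Rightarrow> bool) measure" where
  "dir_bond_ps p = PiM {(u, v). adj u v} (\<lambda>_. measure_pmf (bernoulli_pmf p))"

definition undir_bond_ps :: "real \<Rightarrow> ((int ^ 'd) set \<Rightarrow> bool) measure" where
  "undir_bond_ps p = PiM {{u, v} | u v. adj u v} (\<lambda>_. measure_pmf (bernoulli_pmf p))"

text \<open>All-or-none: vertex u opens all its outgoing edges iff \<omega> u.\<close>
definition aon_reach :: "(int ^ 'd \<Rightarrow> bool) \<Rightarrow> int ^ 'd \<Rightarrow> int ^ 'd \<Rightarrow> bool" where
  "aon_reach \<omega> = (\<lambda>u v. adj u v \<and> \<omega> u)\<^sup>*\<^sup>*"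

definition dir_reach :: "((int ^ 'd) \<times> (int ^ 'd) \<Rightarrow> bool) \<Rightarrow> int ^ 'd \<Rightarrow> int ^ 'd \<Rightarrow> bool" where
  "dir_reach \<omega> = (\<lambda>u v. adj u v \<and> \<omega> (u, v))\<^sup>*\<^sup>*"

definition site_conn :: "(int ^ 'd \<Rightarrow> bool) \<Rightarrow> int ^ 'd \<Rightarrow> int ^ 'd \<Rightarrow> bool" where
  "site_conn \<omega> x y \<longleftrightarrow> \<omega> x \<and> \<omega> y \<and> (\<lambda>u v. adj u v \<and> \<omega> u \<and> \<omega> v)\<^sup>*\<^sup>* x y"

definition bond_conn :: "((int ^ 'd) set \<Rightarrow> bool) \<Rightarrow> int ^ 'd \<Rightarrow> int ^ 'd \<Rightarrow> bool" where
  "bond_conn \<omega> = (\<lambda>u v. adj u v \<and> \<omega> {u, v})\<^sup>*\<^sup>*"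

end

theory Submission
  imports Defs
begin



definition cfg :: "'k set \<Rightarrow> ('k \<Rightarrow> bool) set" where
  "cfg K = PiE K (\<lambda>_. UNIV)"

definition wt :: "real \<Rightarrow> 'k set \<Rightarrow> ('k \<Rightarrow> bool) \<Rightarrow> real" where
  "wt p K y = (\<Prod>k\<in>K. if y k then p else 1 - p)"

definition PP :: "real \<Rightarrow> 'k set \<Rightarrow> (('k \<Rightarrow> bool) \<Rightarrow> bool) \<Rightarrow> real" where
  "PP p K Q = (\<Sum>y\<in>cfg K. wt p K y * (if Q y then 1 else 0))"

lemma finite_cfg[simp]: "finite K \<Longrightarrow> finite (cfg K)"
  unfolding cfg_def by (intro finite_PiE) auto

lemma wt_nonneg: "0 \<le> p \<Longrightarrow> p \<le> 1 \<Longrightarrow> 0 \<le> wt p K y"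
  unfolding wt_def by (intro prod_nonneg) auto

lemma sum_wt: assumes "finite K" shows "(\<Sum>y\<in>cfg K. wt p K y) = 1"
proof -
  have "(\<Prod>k\<in>K. \<Sum>b\<in>(UNIV::bool set). (if b then p else 1 - p)) = (\<Sum>y\<in>cfg K. wt p K y)"
    unfolding cfg_def wt_def using assms by (subst prod_sum_PiE) auto
  moreover have "(\<Sum>b\<in>(UNIV::bool set). (if b then p else 1 - p)) = 1"
    by (simp add: UNIV_bool)
  ultimately show ?thesis by simp
qed

lemma PP_mono: assumes "0 \<le> p" "p \<le> 1" "\<And>y. y \<in> cfg K \<Longrightarrow> Q y \<Longrightarrow> Q' y"
  shows "PP p K Q \<le> PP p K Q'"
  unfolding PP_def using assms wt_nonneg[OF assms(1,2)] by (intro sum_mono) auto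

lemma PP_cong: assumes "\<And>y. y \<in> cfg K \<Longrightarrow> Q y = Q' y"
  shows "PP p K Q = PP p K Q'"
  unfolding PP_def using assms by (intro sum.cong) auto

lemma PP_const: "finite K \<Longrightarrow> PP p K (\<lambda>_. P) = (if P then 1 else 0)"
  unfolding PP_def using sum_wt[of K p] by auto

definition merge :: "'k set \<Rightarrow> ('k \<Rightarrow> bool) \<Rightarrow> ('k \<Rightarrow> bool) \<Rightarrow> 'k \<Rightarrow> bool" where
  "merge A y1 y2 = (\<lambda>k. if k \<in> A then y1 k else y2 k)"

lemma merge_restrict: "y \<in> cfg (A \<union> B) \<Longrightarrow> merge A (restrict y A) (restrict y B) = y"
  by (auto simp: merge_def cfg_def PiE_def extensional_def fun_eq_iff)

lemma PP_split:
  assumes "finite A" "finite B" "A \<inter> B = {}"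
  shows "PP p (A \<union> B) Q = (\<Sum>y1\<in>cfg A. wt p A y1 * PP p B (\<lambda>y2. Q (merge A y1 y2)))"
proof -
  have wm: "wt p (A \<union> B) (merge A y1 y2) = wt p A y1 * wt p B y2" for y1 y2
    unfolding wt_def using assms
    by (subst prod.union_disjoint) (auto simp: merge_def intro!: arg_cong2[where f="(*)"] prod.cong)
  have "PP p (A \<union> B) Q = (\<Sum>(y1,y2)\<in>cfg A \<times> cfg B. wt p (A \<union> B) (merge A y1 y2) *
            (if Q (merge A y1 y2) then 1 else 0))"
    unfolding PP_def
  proof (rule sum.reindex_bij_witness[of _ "\<lambda>(y1,y2). merge A y1 y2" "\<lambda>y. (restrict y A, restrict y B)"])
    fix a assume "a \<in> cfg (A \<union> B)"
    then show "(case (restrict a A, restrict a B) of (y1, y2) \<Rightarrow> merge A y1 y2) = a"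
      "(restrict a A, restrict a B) \<in> cfg A \<times> cfg B"
      "(case (restrict a A, restrict a B) of (y1, y2) \<Rightarrow> wt p (A \<union> B) (merge A y1 y2) * (if Q (merge A y1 y2) then 1 else 0)) = wt p (A \<union> B) a * (if Q a then 1 else 0)"
      by (auto simp: merge_restrict cfg_def)
  next
    fix b assume "b \<in> cfg A \<times> cfg B"
    then show "(restrict (case b of (y1, y2) \<Rightarrow> merge A y1 y2) A, restrict (case b of (y1, y2) \<Rightarrow> merge A y1 y2) B) = b"
      "(case b of (y1, y2) \<Rightarrow> merge A y1 y2) \<in> cfg (A \<union> B)"
      using assms by (auto simp: cfg_def merge_def PiE_def extensional_def restrict_def fun_eq_iff)
  qed
  also have "\<dots> = (\<Sum>y1\<in>cfg A. \<Sum>y2\<in>cfg B. wt p A y1 * (wt p B y2 * (if Q (merge A y1 y2) then 1 else 0)))"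
    by (subst sum.cartesian_product[symmetric]) (simp add: wm mult.assoc)
  also have "\<dots> = (\<Sum>y1\<in>cfg A. wt p A y1 * PP p B (\<lambda>y2. Q (merge A y1 y2)))"
    unfolding PP_def by (simp add: sum_distrib_left)
  finally show ?thesis .
qed

lemma PP_reindex:
  assumes "inj_on f K" "finite K"
    and dep: "\<And>z z'. (\<And>k. k \<in> K \<Longrightarrow> z k = z' k) \<Longrightarrow> Q z = Q z'"
  shows "PP p (f ` K) (\<lambda>y. Q (\<lambda>k. y (f k))) = PP p K Q"
proof -
  have w: "wt p (f ` K) y = wt p K (\<lambda>k. y (f k))" for y
    unfolding wt_def using assms(1) by (simp add: prod.reindex)
  have wr: "wt p K (restrict (\<lambda>k. y (f k)) K) = wt p K (\<lambda>k. y (f k))" for y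
    unfolding wt_def by (intro prod.cong) auto
  have qr: "Q (restrict (\<lambda>k. y (f k)) K) = Q (\<lambda>k. y (f k))" for y
    by (rule dep) auto
  show ?thesis
    unfolding PP_def
    apply (rule sum.reindex_bij_witness[of _ "\<lambda>z. \<lambda>k'. if k' \<in> f ` K then z (the_inv_into K f k') else undefined"
          "\<lambda>y. restrict (\<lambda>k. y (f k)) K"])
    using assms(1) by (auto simp: cfg_def PiE_def extensional_def the_inv_into_f_f w wr qr
          f_the_inv_into_f fun_eq_iff)
qed

definition pt :: "'k \<Rightarrow> bool \<Rightarrow> 'k \<Rightarrow> bool" where
  "pt k b = (\<lambda>x. if x = k then b else undefined)"

lemma pt_same[simp]: "pt k b k = b" by (simp add: pt_def)
lemma pt_neq[simp]: "pt k True \<noteq> pt k False" by (auto simp: pt_def fun_eq_iff)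

lemma cfg_single: "cfg {k} = {pt k True, pt k False}"
  by (auto simp: cfg_def PiE_def extensional_def fun_eq_iff pt_def)

lemma PP_single: "PP p {k} Q = p * (if Q (pt k True) then 1 else 0)
    + (1 - p) * (if Q (pt k False) then 1 else 0)"
  unfolding PP_def cfg_single by (simp add: wt_def)

lemma PP_single_true: assumes "finite K" "k \<in> K" shows "PP p K (\<lambda>y. y k) = p"
proof -
  have K: "K = {k} \<union> (K - {k})" using assms by auto
  have "PP p K (\<lambda>y. y k) = PP p ({k} \<union> (K - {k})) (\<lambda>y. y k)" using K by simp
  also have "\<dots> = (\<Sum>y1\<in>cfg {k}. wt p {k} y1 * PP p (K - {k}) (\<lambda>y2. merge {k} y1 y2 k))"
    using assms by (intro PP_split) auto
  also have "\<dots> = p"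
    using assms by (simp add: cfg_single merge_def PP_const wt_def)
  finally show ?thesis .
qed

lemma PiM_cyl:
  fixes I J :: "'i set" and p :: real
  assumes J: "finite J" "J \<subseteq> I" and p: "0 \<le> p" "p \<le> 1"
  shows "{\<omega>\<in>space (PiM I (\<lambda>_. measure_pmf (bernoulli_pmf p))). Q (restrict \<omega> J)}
            \<in> sets (PiM I (\<lambda>_. measure_pmf (bernoulli_pmf p)))"
    "measure (PiM I (\<lambda>_. measure_pmf (bernoulli_pmf p)))
        {\<omega>\<in>space (PiM I (\<lambda>_. measure_pmf (bernoulli_pmf p))). Q (restrict \<omega> J)} = PP p J Q"
proof -
  let ?B = "\<lambda>_::'i. measure_pmf (bernoulli_pmf p)"
  let ?M = "PiM I ?B"
  interpret product_prob_space ?B I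
    by (rule product_prob_spaceI) (rule prob_space_measure_pmf)
  define S where "S = {z\<in>cfg J. Q z}"
  define C where "C z = prod_emb I ?B J (PiE J (\<lambda>i. {z i}))" for z
  have Ciff: "\<omega> \<in> C z \<longleftrightarrow> \<omega> \<in> space ?M \<and> (\<forall>i\<in>J. \<omega> i = z i)" for \<omega> z
    unfolding C_def prod_emb_def space_PiM by auto
  have eq: "{\<omega>\<in>space ?M. Q (restrict \<omega> J)} = (\<Union>z\<in>S. C z)"
  proof safe
    fix \<omega> assume "\<omega> \<in> space ?M" "Q (restrict \<omega> J)"
    moreover have "restrict \<omega> J \<in> S" using \<open>Q (restrict \<omega> J)\<close> by (simp add: S_def cfg_def)
    ultimately show "\<omega> \<in> (\<Union>z\<in>S. C z)"
      by (intro UN_I[of "restrict \<omega> J"]) (auto simp: Ciff)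
  next
    fix \<omega> z assume "z \<in> S" "\<omega> \<in> C z"
    then show "\<omega> \<in> space ?M" by (simp add: Ciff)
    have "restrict \<omega> J = z" using \<open>z \<in> S\<close> \<open>\<omega> \<in> C z\<close>
      by (auto simp: S_def Ciff cfg_def PiE_def extensional_def fun_eq_iff)
    then show "Q (restrict \<omega> J)" using \<open>z \<in> S\<close> by (simp add: S_def)
  qed
  have Cs: "C z \<in> sets ?M" for z
    unfolding C_def using J by (intro sets_PiM_I) auto
  have fin: "finite S" unfolding S_def using J by simp
  show "{\<omega>\<in>space ?M. Q (restrict \<omega> J)} \<in> sets ?M"
    unfolding eq using fin Cs by (intro sets.finite_UN) auto
  have disj: "disjoint_family_on C S"
    unfolding disjoint_family_on_def
  proof (intro ballI impI)
    fix z1 z2 assume z: "z1 \<in> S" "z2 \<in> S" "z1 \<noteq> z2"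
    then obtain i where "i \<in> J" "z1 i \<noteq> z2 i"
      by (auto simp: S_def cfg_def PiE_def extensional_def fun_eq_iff)
    then show "C z1 \<inter> C z2 = {}" by (auto simp: Ciff)
  qed
  have mC: "measure ?M (C z) = wt p J z" for z
    unfolding C_def using J
    using p by (subst measure_PiM_emb) (auto simp: wt_def measure_pmf_single intro!: prod.cong)
  have "measure ?M (\<Union>z\<in>S. C z) = (\<Sum>z\<in>S. measure ?M (C z))"
    using fin Cs disj by (intro finite_measure_finite_Union) auto
  also have "\<dots> = PP p J Q"
    unfolding PP_def mC S_def using J by (subst sum.inter_filter) (auto intro!: sum.cong)
  finally show "measure ?M {\<omega>\<in>space ?M. Q (restrict \<omega> J)} = PP p J Q" unfolding eq .
qed




lemma rtranclp_first_last:
  assumes "(\<lambda>x y. r0 x y \<or> (x = u \<and> S y))\<^sup>*\<^sup>* a b"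
  shows "r0\<^sup>*\<^sup>* a b \<or> (r0\<^sup>*\<^sup>* a u \<and> (\<exists>v. S v \<and> r0\<^sup>*\<^sup>* v b))"
  using assms
proof (induction rule: rtranclp_induct)
  case base
  then show ?case by simp
next
  case (step y z)
  from step.hyps(2) show ?case
  proof
    assume "r0 y z"
    with step.IH show ?thesis by (meson rtranclp.rtrancl_into_rtrancl)
  next
    assume yz: "y = u \<and> S z"
    from step.IH have "r0\<^sup>*\<^sup>* a u" using yz by auto
    with yz show ?thesis by auto
  qed
qed

definition rel :: "('v \<times> 'v) set \<Rightarrow> ('v \<times> 'v \<Rightarrow> bool) \<Rightarrow> 'v \<Rightarrow> 'v \<Rightarrow> bool" where
  "rel E x = (\<lambda>u v. (u, v) \<in> E \<and> x (u, v))"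

definition Rch :: "('v \<times> 'v) set \<Rightarrow> 'v \<Rightarrow> 'v set \<Rightarrow> ('v \<times> 'v \<Rightarrow> bool) \<Rightarrow> bool" where
  "Rch E s0 T x = (\<exists>t\<in>T. (rel E x)\<^sup>*\<^sup>* s0 t)"

lemma rel_cong: "(\<And>e. e \<in> E \<Longrightarrow> x e = x' e) \<Longrightarrow> rel E x = rel E x'"
  unfolding rel_def by (auto simp: fun_eq_iff)

lemma Rch_cong: "(\<And>e. e \<in> E \<Longrightarrow> x e = x' e) \<Longrightarrow> Rch E s0 T x = Rch E s0 T x'"
  unfolding Rch_def using rel_cong[of E x x'] by simp

lemma aon_swap:
  assumes agree: "\<And>e. e \<in> E \<Longrightarrow> fst e \<noteq> u \<Longrightarrow> x e = x0 e"
    and cl: "\<And>e. e \<in> E \<Longrightarrow> fst e = u \<Longrightarrow> \<not> x0 e"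
  shows "Rch E s0 T x \<longleftrightarrow> Rch E s0 T x0 \<or>
     ((rel E x0)\<^sup>*\<^sup>* s0 u \<and> (\<exists>v. (u, v) \<in> E \<and> x (u, v) \<and> (\<exists>t\<in>T. (rel E x0)\<^sup>*\<^sup>* v t)))"
proof -
  have le: "rel E x0 \<le> rel E x"
    unfolding rel_def using agree cl by auto
  have dec: "rel E x \<le> (\<lambda>a b. rel E x0 a b \<or> (a = u \<and> ((u, b) \<in> E \<and> x (u, b))))"
  proof (intro le_funI le_boolI)
    fix a b assume h: "rel E x a b"
    show "rel E x0 a b \<or> (a = u \<and> ((u, b) \<in> E \<and> x (u, b)))"
    proof (cases "a = u")
      case True then show ?thesis using h unfolding rel_def by auto
    next
      case False then show ?thesis using h agree[of "(a,b)"] unfolding rel_def by auto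
    qed
  qed
  show ?thesis
  proof
    assume "Rch E s0 T x"
    then obtain t where t: "t \<in> T" "(rel E x)\<^sup>*\<^sup>* s0 t" unfolding Rch_def by auto
    then have "(\<lambda>a b. rel E x0 a b \<or> (a = u \<and> ((u, b) \<in> E \<and> x (u, b))))\<^sup>*\<^sup>* s0 t"
      using rtranclp_mono[OF dec] by (auto simp: le_fun_def)
    from rtranclp_first_last[OF this] t show "Rch E s0 T x0 \<or>
     ((rel E x0)\<^sup>*\<^sup>* s0 u \<and> (\<exists>v. (u, v) \<in> E \<and> x (u, v) \<and> (\<exists>t\<in>T. (rel E x0)\<^sup>*\<^sup>* v t)))"
      unfolding Rch_def by blast
  next
    have m: "(rel E x0)\<^sup>*\<^sup>* a b \<Longrightarrow> (rel E x)\<^sup>*\<^sup>* a b" for a b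
      using rtranclp_mono[OF le] by (auto simp: le_fun_def)
    assume "Rch E s0 T x0 \<or>
     ((rel E x0)\<^sup>*\<^sup>* s0 u \<and> (\<exists>v. (u, v) \<in> E \<and> x (u, v) \<and> (\<exists>t\<in>T. (rel E x0)\<^sup>*\<^sup>* v t)))"
    then show "Rch E s0 T x"
    proof
      assume "Rch E s0 T x0" then show ?thesis unfolding Rch_def using m by blast
    next
      assume "(rel E x0)\<^sup>*\<^sup>* s0 u \<and> (\<exists>v. (u, v) \<in> E \<and> x (u, v) \<and> (\<exists>t\<in>T. (rel E x0)\<^sup>*\<^sup>* v t))"
      then obtain v t where "(rel E x)\<^sup>*\<^sup>* s0 u" "rel E x u v" "t \<in> T" "(rel E x)\<^sup>*\<^sup>* v t"
        using m unfolding rel_def by blast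
      then show ?thesis unfolding Rch_def
        by (meson converse_rtranclp_into_rtranclp rtranclp_trans)
    qed
  qed
qed

lemma undir_swap:
  fixes r0 :: "'v \<Rightarrow> 'v \<Rightarrow> bool" and T :: "'v set" and s0 a b :: 'v
  defines "F \<equiv> \<lambda>\<alpha> \<beta>. \<exists>t\<in>T. (\<lambda>x y. r0 x y \<or> (\<alpha> \<and> x = a \<and> y = b) \<or> (\<beta> \<and> x = b \<and> y = a))\<^sup>*\<^sup>* s0 t"
  shows "F True True \<Longrightarrow> F True False \<or> F False True"
    "F True False \<Longrightarrow> F False True \<Longrightarrow> F False False"
    "F False False \<Longrightarrow> F \<alpha> \<beta>"
    "F \<alpha> \<beta> \<Longrightarrow> F True True"
proof -
  let ?r = "\<lambda>\<alpha> \<beta> x y. r0 x y \<or> (\<alpha> \<and> x = a \<and> y = b) \<or> (\<beta> \<and> x = b \<and> y = a)"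
  have mono: "(?r \<alpha> \<beta>)\<^sup>*\<^sup>* x y \<Longrightarrow> \<alpha> \<le> \<alpha>' \<Longrightarrow> \<beta> \<le> \<beta>' \<Longrightarrow> (?r \<alpha>' \<beta>')\<^sup>*\<^sup>* x y" for \<alpha> \<beta> \<alpha>' \<beta>' x y
    by (erule rtranclp_mono[THEN predicate2D, rotated]) auto
  have r0m: "r0\<^sup>*\<^sup>* x y \<Longrightarrow> (?r \<alpha> \<beta>)\<^sup>*\<^sup>* x y" for \<alpha> \<beta> x y
    by (erule rtranclp_mono[THEN predicate2D, rotated]) auto
  have d10: "(?r True False)\<^sup>*\<^sup>* x y \<Longrightarrow> r0\<^sup>*\<^sup>* x y \<or> (r0\<^sup>*\<^sup>* x a \<and> r0\<^sup>*\<^sup>* b y)" for x y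
  proof -
    assume "(?r True False)\<^sup>*\<^sup>* x y"
    then have "(\<lambda>x y. r0 x y \<or> (x = a \<and> y = b))\<^sup>*\<^sup>* x y" by simp
    from rtranclp_first_last[OF this] show ?thesis by auto
  qed
  have d01: "(?r False True)\<^sup>*\<^sup>* x y \<Longrightarrow> r0\<^sup>*\<^sup>* x y \<or> (r0\<^sup>*\<^sup>* x b \<and> r0\<^sup>*\<^sup>* a y)" for x y
  proof -
    assume "(?r False True)\<^sup>*\<^sup>* x y"
    then have "(\<lambda>x y. r0 x y \<or> (x = b \<and> y = a))\<^sup>*\<^sup>* x y" by simp
    from rtranclp_first_last[OF this] show ?thesis by auto
  qed
  have d11: "(?r True True)\<^sup>*\<^sup>* x y \<Longrightarrow> (?r False True)\<^sup>*\<^sup>* x y \<or> ((?r False True)\<^sup>*\<^sup>* x a \<and> (?r False True)\<^sup>*\<^sup>* b y)" for x y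
  proof -
    assume "(?r True True)\<^sup>*\<^sup>* x y"
    then have "(\<lambda>x y. ?r False True x y \<or> (x = a \<and> y = b))\<^sup>*\<^sup>* x y"
      by (rule rtranclp_mono[THEN predicate2D, rotated]) auto
    from rtranclp_first_last[OF this] show ?thesis by auto
  qed
  show "F \<alpha> \<beta> \<Longrightarrow> F True True"
  proof -
    assume "F \<alpha> \<beta>"
    then obtain t where "t \<in> T" "(?r \<alpha> \<beta>)\<^sup>*\<^sup>* s0 t" unfolding F_def by blast
    with mono[of \<alpha> \<beta> s0 t True True] show ?thesis unfolding F_def by auto
  qed
  show "F False False \<Longrightarrow> F \<alpha> \<beta>"
  proof -
    assume "F False False"
    then obtain t where "t \<in> T" "(?r False False)\<^sup>*\<^sup>* s0 t" unfolding F_def by blast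
    with mono[of False False s0 t \<alpha> \<beta>] show ?thesis unfolding F_def by auto
  qed
  show "F True False \<Longrightarrow> F False True \<Longrightarrow> F False False"
  proof -
    assume "F True False" "F False True"
    then obtain t1 t2 where t: "t1 \<in> T" "(?r True False)\<^sup>*\<^sup>* s0 t1" "t2 \<in> T" "(?r False True)\<^sup>*\<^sup>* s0 t2"
      unfolding F_def by blast
    have "\<exists>t\<in>T. r0\<^sup>*\<^sup>* s0 t"
      using d10[OF t(2)] d01[OF t(4)] t(1,3) by (meson rtranclp_trans)
    then show "F False False"
      unfolding F_def using r0m by blast
  qed
  show "F True True \<Longrightarrow> F True False \<or> F False True"
  proof -
    assume "F True True"
    then obtain t where t: "t \<in> T" "(?r True True)\<^sup>*\<^sup>* s0 t" unfolding F_def by blast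
    from d11[OF t(2)] show ?thesis
    proof
      assume "(?r False True)\<^sup>*\<^sup>* s0 t" then show ?thesis using t(1) unfolding F_def by blast
    next
      assume h: "(?r False True)\<^sup>*\<^sup>* s0 a \<and> (?r False True)\<^sup>*\<^sup>* b t"
      from d01[of b t] h have "r0\<^sup>*\<^sup>* b t \<or> (r0\<^sup>*\<^sup>* b b \<and> r0\<^sup>*\<^sup>* a t)" by blast
      then show ?thesis
      proof
        assume bt: "r0\<^sup>*\<^sup>* b t"
        from d01[of s0 a] h have "r0\<^sup>*\<^sup>* s0 a \<or> (r0\<^sup>*\<^sup>* s0 b \<and> r0\<^sup>*\<^sup>* a a)" by blast
        then show ?thesis
        proof
          assume "r0\<^sup>*\<^sup>* s0 a"
          then have "(?r True False)\<^sup>*\<^sup>* s0 a" by (rule r0m)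
          moreover have "(?r True False) a b" by simp
          moreover have "(?r True False)\<^sup>*\<^sup>* b t" using bt by (rule r0m)
          ultimately have "(?r True False)\<^sup>*\<^sup>* s0 t"
            by (rule rtranclp_trans[OF rtranclp.rtrancl_into_rtrancl])
          then show ?thesis using t(1) unfolding F_def by blast
        next
          assume "r0\<^sup>*\<^sup>* s0 b \<and> r0\<^sup>*\<^sup>* a a"
          then have "r0\<^sup>*\<^sup>* s0 t" using bt by auto
          then show ?thesis using t(1) r0m unfolding F_def by blast
        qed
      next
        assume "r0\<^sup>*\<^sup>* b b \<and> r0\<^sup>*\<^sup>* a t"
        then have "(?r False True)\<^sup>*\<^sup>* a t" using r0m by blast
        moreover have "(?r False True)\<^sup>*\<^sup>* s0 a" using h by blast
        ultimately have "(?r False True)\<^sup>*\<^sup>* s0 t" by (rule rtranclp_trans[rotated])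
        then show ?thesis using t(1) unfolding F_def by blast
      qed
    qed
  qed
qed




definition aC :: "'v set \<Rightarrow> ('v \<times> 'v) set \<Rightarrow> 'v set \<Rightarrow> ('v + 'v \<times> 'v) set" where
  "aC B E U = Inl ` (B - U) \<union> Inr ` {e\<in>E. fst e \<in> U}"

definition acm :: "'v set \<Rightarrow> 'v \<times> 'v \<Rightarrow> 'v + 'v \<times> 'v" where
  "acm U e = (if fst e \<in> U then Inr e else Inl (fst e))"

lemma aon_step:
  fixes E :: "('v \<times> 'v) set"
  assumes B: "finite B" "E \<subseteq> B \<times> B" and p: "0 \<le> p" "p \<le> 1"
    and U: "U \<subseteq> B" "u \<in> B" "u \<notin> U"
  shows "PP p (aC B E U) (\<lambda>y. Rch E s0 T (\<lambda>e. y (acm U e)))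
       \<le> PP p (aC B E (insert u U)) (\<lambda>y. Rch E s0 T (\<lambda>e. y (acm (insert u U) e)))"
proof -
  define C' where "C' = Inl ` (B - insert u U) \<union> Inr ` {e\<in>E. fst e \<in> U}"
  define K2 :: "('v + 'v \<times> 'v) set" where "K2 = Inr ` {e\<in>E. fst e = u}"
  have finE: "finite E" using B by (meson finite_SigmaI finite_subset)
  have fC': "finite C'" unfolding C'_def using B finE by auto
  have fK2: "finite K2" unfolding K2_def using finE by auto
  have c1: "aC B E U = C' \<union> {Inl u}" unfolding aC_def C'_def using U by auto
  have c2: "aC B E (insert u U) = C' \<union> K2" unfolding aC_def C'_def K2_def using U by auto
  have d1: "C' \<inter> {Inl u} = {}" unfolding C'_def by auto
  have d2: "C' \<inter> K2 = {}" unfolding C'_def K2_def using U by auto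
  have "PP p (aC B E U) (\<lambda>y. Rch E s0 T (\<lambda>e. y (acm U e)))
     = (\<Sum>y1\<in>cfg C'. wt p C' y1 * PP p {Inl u} (\<lambda>y2. Rch E s0 T (\<lambda>e. merge C' y1 y2 (acm U e))))"
    unfolding c1 using fC' d1 by (intro PP_split) auto
  also have "\<dots> \<le> (\<Sum>y1\<in>cfg C'. wt p C' y1 * PP p K2 (\<lambda>y2. Rch E s0 T (\<lambda>e. merge C' y1 y2 (acm (insert u U) e))))"
  proof (intro sum_mono mult_left_mono wt_nonneg p)
    fix y1 assume y1: "y1 \<in> cfg C'"
    define x0 where "x0 = (\<lambda>e. if fst e = u then False else y1 (acm U e))"
    define A where "A = Rch E s0 T x0"
    define R where "R = (rel E x0)\<^sup>*\<^sup>* s0 u"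
    define G where "G = (\<lambda>v. (u, v) \<in> E \<and> (\<exists>t\<in>T. (rel E x0)\<^sup>*\<^sup>* v t))"
    have inC': "e \<in> E \<Longrightarrow> fst e \<noteq> u \<Longrightarrow> acm U e \<in> C'" for e
      using B U unfolding C'_def acm_def by (cases e) auto
    have inB: "(a, b) \<in> E \<Longrightarrow> a \<in> B" for a b using B by auto
    have same: "e \<in> E \<Longrightarrow> fst e \<noteq> u \<Longrightarrow> acm (insert u U) e = acm U e" for e
      unfolding acm_def by auto
    have L: "Rch E s0 T (\<lambda>e. merge C' y1 y2 (acm U e)) \<longleftrightarrow> A \<or> (R \<and> (\<exists>v. G v \<and> y2 (Inl u)))" for y2
      unfolding A_def R_def G_def
      by (subst aon_swap[of E u _ x0]) (auto simp: x0_def merge_def inC' acm_def C'_def U dest: inB)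
    have R2: "Rch E s0 T (\<lambda>e. merge C' y1 y2 (acm (insert u U) e)) \<longleftrightarrow> A \<or> (R \<and> (\<exists>v. G v \<and> y2 (Inr (u, v))))" for y2
      unfolding A_def R_def G_def
      by (subst aon_swap[of E u _ x0]) (auto simp: x0_def merge_def inC' same acm_def C'_def U dest: inB)
    show "PP p {Inl u} (\<lambda>y2. Rch E s0 T (\<lambda>e. merge C' y1 y2 (acm U e)))
        \<le> PP p K2 (\<lambda>y2. Rch E s0 T (\<lambda>e. merge C' y1 y2 (acm (insert u U) e)))"
      unfolding L R2
    proof (cases "A \<or> \<not> R \<or> \<not> (\<exists>v. G v)")
      case True
      then show "PP p {Inl u :: 'v + 'v \<times> 'v} (\<lambda>y2. A \<or> (R \<and> (\<exists>v. G v \<and> y2 (Inl u))))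
          \<le> PP p K2 (\<lambda>y2. A \<or> (R \<and> (\<exists>v. G v \<and> y2 (Inr (u, v)))))"
        using fK2 by (auto simp: PP_const)
    next
      case False
      then obtain v0 where "G v0" "\<not> A" "R" by auto
      have "PP p {Inl u :: 'v + 'v \<times> 'v} (\<lambda>y2. A \<or> (R \<and> (\<exists>v. G v \<and> y2 (Inl u)))) = PP p {Inl u :: 'v + 'v \<times> 'v} (\<lambda>y2. y2 (Inl u))"
        by (rule PP_cong) (use \<open>G v0\<close> \<open>\<not> A\<close> \<open>R\<close> in auto)
      also have "\<dots> = p" by (rule PP_single_true) auto
      also have "\<dots> = PP p K2 (\<lambda>y2. y2 (Inr (u, v0)))"
        using fK2 \<open>G v0\<close> by (intro PP_single_true[symmetric]) (auto simp: K2_def G_def)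
      also have "\<dots> \<le> PP p K2 (\<lambda>y2. A \<or> (R \<and> (\<exists>v. G v \<and> y2 (Inr (u, v)))))"
        using \<open>G v0\<close> \<open>R\<close> p by (intro PP_mono) auto
      finally show "PP p {Inl u :: 'v + 'v \<times> 'v} (\<lambda>y2. A \<or> (R \<and> (\<exists>v. G v \<and> y2 (Inl u))))
          \<le> PP p K2 (\<lambda>y2. A \<or> (R \<and> (\<exists>v. G v \<and> y2 (Inr (u, v)))))" .
    qed
  qed
  also have "\<dots> = PP p (aC B E (insert u U)) (\<lambda>y. Rch E s0 T (\<lambda>e. y (acm (insert u U) e)))"
    unfolding c2 using fC' fK2 d2 by (intro PP_split[symmetric]) auto
  finally show ?thesis .
qed

theorem aon_le_dir:
  fixes E :: "('v \<times> 'v) set"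
  assumes B: "finite B" "E \<subseteq> B \<times> B" and p: "0 \<le> p" "p \<le> 1"
  shows "PP p B (\<lambda>z. \<exists>t\<in>T. (\<lambda>u v. (u, v) \<in> E \<and> z u)\<^sup>*\<^sup>* s0 t) \<le> PP p E (Rch E s0 T)"
proof -
  have finE: "finite E" using B by (meson finite_SigmaI finite_subset)
  have ind: "PP p (aC B E {}) (\<lambda>y. Rch E s0 T (\<lambda>e. y (acm {} e)))
      \<le> PP p (aC B E U) (\<lambda>y. Rch E s0 T (\<lambda>e. y (acm U e)))" if "U \<subseteq> B" for U
    using finite_subset[OF that B(1)] that
  proof (induction U rule: finite_induct)
    case empty then show ?case by simp
  next
    case (insert u U)
    then show ?case using aon_step[OF B p, of U u s0 T] by auto
  qed
  have e0: "PP p (aC B E {}) (\<lambda>y. Rch E s0 T (\<lambda>e. y (acm {} e)))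
      = PP p B (\<lambda>z. \<exists>t\<in>T. (\<lambda>u v. (u, v) \<in> E \<and> z u)\<^sup>*\<^sup>* s0 t)"
  proof -
    have "PP p (aC B E {}) (\<lambda>y. Rch E s0 T (\<lambda>e. y (acm {} e)))
        = PP p (Inl ` B :: ('v + 'v \<times> 'v) set) (\<lambda>y. (\<lambda>z. Rch E s0 T (\<lambda>e. z (fst e))) (\<lambda>k. y (Inl k)))"
      by (simp add: aC_def acm_def)
    also have "\<dots> = PP p B (\<lambda>z. Rch E s0 T (\<lambda>e. z (fst e)))"
      using B by (intro PP_reindex) (auto intro!: Rch_cong)
    also have "\<dots> = PP p B (\<lambda>z. \<exists>t\<in>T. (\<lambda>u v. (u, v) \<in> E \<and> z u)\<^sup>*\<^sup>* s0 t)"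
      unfolding Rch_def rel_def by simp
    finally show ?thesis .
  qed
  have e1: "PP p (aC B E B) (\<lambda>y. Rch E s0 T (\<lambda>e. y (acm B e))) = PP p E (Rch E s0 T)"
  proof -
    have "aC B E B = Inr ` E" unfolding aC_def using B by auto
    then have "PP p (aC B E B) (\<lambda>y. Rch E s0 T (\<lambda>e. y (acm B e)))
        = PP p (Inr ` E :: ('v + 'v \<times> 'v) set) (\<lambda>y. Rch E s0 T (\<lambda>k. y (Inr k)))"
      using B by (auto intro!: PP_cong Rch_cong simp: acm_def)
    also have "\<dots> = PP p E (Rch E s0 T)"
      using finE by (intro PP_reindex) (auto intro!: Rch_cong)
    finally show ?thesis .
  qed
  show ?thesis using ind[of B] e0 e1 by simp
qed




lemma ind_def_helper: "(if P then (1::real) else 0) = (if P then 1 else 0)" by simp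

lemma PP_two:
  assumes "k1 \<noteq> k2"
  shows "PP p {k1, k2} (\<lambda>y. Q (y k1) (y k2)) =
    p * (p * (if Q True True then 1 else 0) + (1 - p) * (if Q True False then 1 else 0)) +
    (1 - p) * (p * (if Q False True then 1 else 0) + (1 - p) * (if Q False False then 1 else 0))"
proof -
  have e: "{k1, k2} = {k1} \<union> {k2}" by auto
  have "PP p {k1, k2} (\<lambda>y. Q (y k1) (y k2)) = PP p ({k1} \<union> {k2}) (\<lambda>y. Q (y k1) (y k2))" by (simp only: e)
  also have "\<dots> = (\<Sum>y1\<in>cfg {k1}. wt p {k1} y1 * PP p {k2} (\<lambda>y2. Q (merge {k1} y1 y2 k1) (merge {k1} y1 y2 k2)))"
    using assms by (intro PP_split) auto
  also have "\<dots> = (\<Sum>y1\<in>cfg {k1}. wt p {k1} y1 * PP p {k2} (\<lambda>y2. Q (y1 k1) (y2 k2)))"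
    using assms by (simp add: merge_def)
  also have "\<dots> = p * (p * (if Q True True then 1 else 0) + (1 - p) * (if Q True False then 1 else 0)) +
    (1 - p) * (p * (if Q False True then 1 else 0) + (1 - p) * (if Q False False then 1 else 0))"
    by (simp add: cfg_single wt_def PP_single)
  finally show ?thesis .
qed

definition ed :: "'v \<times> 'v \<Rightarrow> 'v set" where "ed e = {fst e, snd e}"

definition uC :: "('v \<times> 'v) set \<Rightarrow> 'v set set \<Rightarrow> ('v set + 'v \<times> 'v) set" where
  "uC E D = Inl ` (ed ` E - D) \<union> Inr ` {e\<in>E. ed e \<in> D}"

definition ucm :: "'v set set \<Rightarrow> 'v \<times> 'v \<Rightarrow> 'v set + 'v \<times> 'v" where
  "ucm D e = (if ed e \<in> D then Inr e else Inl (ed e))"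

lemma undir_step:
  fixes E :: "('v \<times> 'v) set"
  assumes E: "finite E" "\<And>u v. (u, v) \<in> E \<Longrightarrow> (v, u) \<in> E" "\<And>u v. (u, v) \<in> E \<Longrightarrow> u \<noteq> v"
    and p: "0 \<le> p" "p \<le> 1"
    and D: "D \<subseteq> ed ` E" "s \<in> ed ` E" "s \<notin> D"
  shows "PP p (uC E D) (\<lambda>y. Rch E s0 T (\<lambda>e. y (ucm D e)))
       = PP p (uC E (insert s D)) (\<lambda>y. Rch E s0 T (\<lambda>e. y (ucm (insert s D) e)))"
proof -
  obtain a b where ab: "(a, b) \<in> E" "s = {a, b}" using D unfolding ed_def by auto
  have ba: "(b, a) \<in> E" using E ab by auto
  have anb: "a \<noteq> b" using E ab by auto
  have edS: "e \<in> E \<Longrightarrow> ed e = s \<longleftrightarrow> e = (a, b) \<or> e = (b, a)" for e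
    using ab anb unfolding ed_def by (cases e) (auto simp: doubleton_eq_iff)
  have eab: "ed (a, b) = s" "ed (b, a) = s" using ab unfolding ed_def by auto
  have edab: "ed (a, b) = {a, b}" "ed (b, a) = {a, b}" by (auto simp: ed_def)
  have nD: "ed (a, b) \<notin> D" "ed (b, a) \<notin> D" using eab D(3) by auto
  define C' where "C' = Inl ` (ed ` E - insert s D) \<union> Inr ` {e\<in>E. ed e \<in> D}"
  have fC': "finite C'" unfolding C'_def using E by auto
  have sD: "ed ` E - D = insert s (ed ` E - insert s D)" using D(2,3) by blast
  have c1: "uC E D = C' \<union> {Inl s}" unfolding uC_def C'_def sD by auto
  have c2: "uC E (insert s D) = C' \<union> {Inr (a, b), Inr (b, a)}"
    unfolding uC_def C'_def using D(1,3) ab ba edS nD by (auto simp: edab)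
  have d1: "C' \<inter> {Inl s} = {}" unfolding C'_def by auto
  have d2: "C' \<inter> {Inr (a, b), Inr (b, a)} = {}" unfolding C'_def using D(1,3) ab ba edS nD by (auto simp: edab)
  have "PP p (uC E D) (\<lambda>y. Rch E s0 T (\<lambda>e. y (ucm D e)))
     = (\<Sum>y1\<in>cfg C'. wt p C' y1 * PP p {Inl s} (\<lambda>y2. Rch E s0 T (\<lambda>e. merge C' y1 y2 (ucm D e))))"
    unfolding c1 using fC' d1 by (intro PP_split) auto
  also have "\<dots> = (\<Sum>y1\<in>cfg C'. wt p C' y1 * PP p {Inr (a, b), Inr (b, a)} (\<lambda>y2. Rch E s0 T (\<lambda>e. merge C' y1 y2 (ucm (insert s D) e))))"
  proof (intro sum.cong refl arg_cong2[where f="(*)"])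
    fix y1 assume y1: "y1 \<in> cfg C'"
    define x00 where "x00 = (\<lambda>e. if ed e = s then False else y1 (ucm D e))"
    define r0 where "r0 = rel E x00"
    define F where "F = (\<lambda>\<alpha> \<beta>. \<exists>t\<in>T. (\<lambda>x y. r0 x y \<or> (\<alpha> \<and> x = a \<and> y = b) \<or> (\<beta> \<and> x = b \<and> y = a))\<^sup>*\<^sup>* s0 t)"
    have key: "Rch E s0 T x = F (x (a, b)) (x (b, a))" if agree: "\<And>e. e \<in> E \<Longrightarrow> ed e \<noteq> s \<Longrightarrow> x e = x00 e" for x
    proof -
      have "rel E x = (\<lambda>u v. r0 u v \<or> (x (a, b) \<and> u = a \<and> v = b) \<or> (x (b, a) \<and> u = b \<and> v = a))"
      proof (intro ext)
        fix u v
        show "rel E x u v = (r0 u v \<or> (x (a, b) \<and> u = a \<and> v = b) \<or> (x (b, a) \<and> u = b \<and> v = a))"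
        proof (cases "(u, v) \<in> E \<and> ed (u, v) = s")
          case True
          then have "(u, v) = (a, b) \<or> (u, v) = (b, a)" using edS by blast
          then show ?thesis using True anb unfolding r0_def rel_def x00_def by auto
        next
          case False
          then show ?thesis using agree[of "(u, v)"] ab ba edS[of "(u,v)"] unfolding r0_def rel_def x00_def by auto
        qed
      qed
      then show ?thesis unfolding Rch_def F_def by simp
    qed
    have inC': "e \<in> E \<Longrightarrow> ed e \<noteq> s \<Longrightarrow> ucm D e \<in> C'" for e
      unfolding C'_def ucm_def by auto
    have same: "ucm (insert s D) e = ucm D e" if "ed e \<noteq> s" for e
      using that unfolding ucm_def by auto
    have L: "Rch E s0 T (\<lambda>e. merge C' y1 y2 (ucm D e)) = F (y2 (Inl s)) (y2 (Inl s))" for y2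
    proof -
      have "Rch E s0 T (\<lambda>e. merge C' y1 y2 (ucm D e)) = F (merge C' y1 y2 (ucm D (a, b))) (merge C' y1 y2 (ucm D (b, a)))"
        by (rule key) (auto simp: merge_def inC' x00_def)
      moreover have "ucm D (a, b) = Inl s" "ucm D (b, a) = Inl s"
        by (simp_all add: ucm_def eab D(3))
      ultimately show ?thesis using d1 by (simp add: merge_def)
    qed
    have R: "Rch E s0 T (\<lambda>e. merge C' y1 y2 (ucm (insert s D) e)) = F (y2 (Inr (a, b))) (y2 (Inr (b, a)))" for y2
    proof -
      have "Rch E s0 T (\<lambda>e. merge C' y1 y2 (ucm (insert s D) e)) = F (merge C' y1 y2 (ucm (insert s D) (a, b))) (merge C' y1 y2 (ucm (insert s D) (b, a)))"
        by (rule key) (auto simp: merge_def inC' x00_def same)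
      moreover have "ucm (insert s D) (a, b) = Inr (a, b)" "ucm (insert s D) (b, a) = Inr (b, a)"
        by (simp_all add: ucm_def eab)
      ultimately show ?thesis using d2 by (simp add: merge_def)
    qed
    have sw: "F True True \<Longrightarrow> F True False \<or> F False True"
      "F True False \<Longrightarrow> F False True \<Longrightarrow> F False False"
      "F False False \<Longrightarrow> F \<alpha> \<beta>" "F \<alpha> \<beta> \<Longrightarrow> F True True" for \<alpha> \<beta>
      unfolding F_def
      by (rule undir_swap(1), assumption) (rule undir_swap(2), assumption+, rule undir_swap(3), assumption, rule undir_swap(4), assumption)
    have "PP p {Inl s} (\<lambda>y2. Rch E s0 T (\<lambda>e. merge C' y1 y2 (ucm D e)))
        = p * (if F True True then 1 else 0) + (1 - p) * (if F False False then 1 else 0)"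
      unfolding L PP_single by simp
    also have "\<dots> = p * (p * (if F True True then 1 else 0) + (1 - p) * (if F True False then 1 else 0)) +
      (1 - p) * (p * (if F False True then 1 else 0) + (1 - p) * (if F False False then 1 else 0))"
      using sw(1) sw(2) sw(3)[of True False] sw(3)[of False True] sw(3)[of True True]
        sw(4)[of True False] sw(4)[of False True]
      by (cases "F True True"; cases "F True False"; cases "F False True"; cases "F False False") (simp_all add: algebra_simps)
    also have "\<dots> = PP p ({Inr (a, b), Inr (b, a)} :: ('v set + 'v \<times> 'v) set) (\<lambda>y2. F (y2 (Inr (a, b))) (y2 (Inr (b, a))))"
      using anb by (intro PP_two[symmetric]) auto
    also have "\<dots> = PP p {Inr (a, b), Inr (b, a)} (\<lambda>y2. Rch E s0 T (\<lambda>e. merge C' y1 y2 (ucm (insert s D) e)))"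
      unfolding R ..
    finally show "PP p {Inl s} (\<lambda>y2. Rch E s0 T (\<lambda>e. merge C' y1 y2 (ucm D e)))
       = PP p {Inr (a, b), Inr (b, a)} (\<lambda>y2. Rch E s0 T (\<lambda>e. merge C' y1 y2 (ucm (insert s D) e)))" .
  qed
  also have "\<dots> = PP p (uC E (insert s D)) (\<lambda>y. Rch E s0 T (\<lambda>e. y (ucm (insert s D) e)))"
    unfolding c2 using fC' d2 by (intro PP_split[symmetric]) auto
  finally show ?thesis .
qed

theorem undir_eq_dir:
  fixes E :: "('v \<times> 'v) set"
  assumes E: "finite E" "\<And>u v. (u, v) \<in> E \<Longrightarrow> (v, u) \<in> E" "\<And>u v. (u, v) \<in> E \<Longrightarrow> u \<noteq> v"
    and p: "0 \<le> p" "p \<le> 1"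
  shows "PP p ((\<lambda>(u, v). {u, v}) ` E) (\<lambda>z. \<exists>t\<in>T. (\<lambda>u v. (u, v) \<in> E \<and> z {u, v})\<^sup>*\<^sup>* s0 t) = PP p E (Rch E s0 T)"
proof -
  have edE: "(\<lambda>(u, v). {u, v}) ` E = ed ` E" unfolding ed_def by (auto simp: case_prod_beta)
  have ind: "PP p (uC E {}) (\<lambda>y. Rch E s0 T (\<lambda>e. y (ucm {} e)))
      = PP p (uC E D) (\<lambda>y. Rch E s0 T (\<lambda>e. y (ucm D e)))" if "D \<subseteq> ed ` E" for D
    using finite_subset[OF that finite_imageI[OF E(1)]] that
  proof (induction D rule: finite_induct)
    case empty then show ?case by simp
  next
    case (insert s D)
    have "D \<subseteq> ed ` E" "s \<in> ed ` E" using insert.prems by auto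
    from undir_step[OF E p this insert.hyps(2)] insert.IH[OF \<open>D \<subseteq> ed ` E\<close>]
    show ?case by simp
  qed
  have e0: "PP p (uC E {}) (\<lambda>y. Rch E s0 T (\<lambda>e. y (ucm {} e)))
      = PP p (ed ` E) (\<lambda>z. \<exists>t\<in>T. (\<lambda>u v. (u, v) \<in> E \<and> z {u, v})\<^sup>*\<^sup>* s0 t)"
  proof -
    have "PP p (uC E {}) (\<lambda>y. Rch E s0 T (\<lambda>e. y (ucm {} e)))
        = PP p (Inl ` ed ` E :: ('v set + 'v \<times> 'v) set) (\<lambda>y. (\<lambda>z. Rch E s0 T (\<lambda>e. z (ed e))) (\<lambda>k. y (Inl k)))"
      by (simp add: uC_def ucm_def)
    also have "\<dots> = PP p (ed ` E) (\<lambda>z. Rch E s0 T (\<lambda>e. z (ed e)))"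
      using E(1) by (intro PP_reindex) (auto intro!: Rch_cong)
    also have "\<dots> = PP p (ed ` E) (\<lambda>z. \<exists>t\<in>T. (\<lambda>u v. (u, v) \<in> E \<and> z {u, v})\<^sup>*\<^sup>* s0 t)"
      unfolding Rch_def rel_def ed_def by simp
    finally show ?thesis .
  qed
  have e1: "PP p (uC E (ed ` E)) (\<lambda>y. Rch E s0 T (\<lambda>e. y (ucm (ed ` E) e))) = PP p E (Rch E s0 T)"
  proof -
    have "uC E (ed ` E) = Inr ` E" unfolding uC_def by auto
    then have "PP p (uC E (ed ` E)) (\<lambda>y. Rch E s0 T (\<lambda>e. y (ucm (ed ` E) e)))
        = PP p (Inr ` E :: ('v set + 'v \<times> 'v) set) (\<lambda>y. Rch E s0 T (\<lambda>k. y (Inr k)))"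
      by (auto intro!: PP_cong Rch_cong simp: ucm_def)
    also have "\<dots> = PP p E (Rch E s0 T)"
      using E(1) by (intro PP_reindex) (auto intro!: Rch_cong)
    finally show ?thesis .
  qed
  show ?thesis using ind[of "ed ` E"] e0 e1 edE by simp
qed




lemma norm1_nonneg: "0 \<le> norm1 x" unfolding norm1_def by (intro sum_nonneg) auto

lemma norm1_zero[simp]: "norm1 0 = 0" unfolding norm1_def by simp

lemma norm1_commute: "norm1 (u - v) = norm1 (v - u)"
  unfolding norm1_def by (intro sum.cong) auto

lemma norm1_tri: "norm1 u \<le> norm1 v + norm1 (u - v)"
  unfolding norm1_def by (subst sum.distrib[symmetric]) (intro sum_mono, auto)

lemma adj_sym: "adj u v \<Longrightarrow> adj v u" unfolding adj_def by (simp add: norm1_commute)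

lemma adj_irrefl: "adj u v \<Longrightarrow> u \<noteq> v" unfolding adj_def by auto

lemma adj_norm: "adj u v \<Longrightarrow> norm1 v \<le> norm1 u + 1 \<and> norm1 u \<le> norm1 v + 1"
  unfolding adj_def using norm1_tri[of u v] norm1_tri[of v u] norm1_commute[of u v] by auto

lemma comp_le_norm1: "\<bar>x $ i\<bar> \<le> norm1 x"
  unfolding norm1_def by (rule member_le_sum) auto

lemma finite_ball1: "finite (ball1 n :: (int ^ 'd) set)"
proof -
  have "ball1 n \<subseteq> vec_lambda ` (PiE UNIV (\<lambda>_::'d. {- int n..int n}))"
  proof
    fix x :: "int ^ 'd" assume "x \<in> ball1 n"
    then have "\<bar>x $ i\<bar> \<le> int n" for i using comp_le_norm1[of x i] by (auto simp: ball1_def)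
    then have "(\<lambda>i. x $ i) \<in> PiE UNIV (\<lambda>_::'d. {- int n..int n})" by (auto simp: abs_le_iff) (metis minus_le_iff)
    then show "x \<in> vec_lambda ` (PiE UNIV (\<lambda>_::'d. {- int n..int n}))"
      by (intro image_eqI[of _ _ "\<lambda>i. x $ i"]) (auto simp: vec_lambda_eta)
  qed
  moreover have "finite (PiE UNIV (\<lambda>_::'d. {- int n..int n}))" by (intro finite_PiE) auto
  ultimately show ?thesis by (meson finite_imageI finite_subset)
qed

lemma bdry_iff: "y \<in> bdry n \<longleftrightarrow> norm1 y = int n + 1"
  unfolding bdry_def ball1_def by auto

lemma mid_reach:
  assumes r: "\<And>u v. r u v \<Longrightarrow> adj u v" and y: "r\<^sup>*\<^sup>* 0 y"
  shows "0 \<le> k \<Longrightarrow> k \<le> norm1 y \<Longrightarrow> \<exists>y'. r\<^sup>*\<^sup>* 0 y' \<and> norm1 y' = k"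
  using y
proof (induction arbitrary: k rule: rtranclp_induct)
  case base then show ?case by auto
next
  case (step y z)
  show ?case
  proof (cases "k \<le> norm1 y")
    case True then show ?thesis using step by auto
  next
    case False
    then have "k = norm1 z" using adj_norm[OF r[OF step.hyps(2)]] step.prems by auto
    then show ?thesis using rtranclp.rtrancl_into_rtrancl[OF step.hyps(1,2)] by blast
  qed
qed

lemma local_reach:
  assumes r: "\<And>u v. r u v \<Longrightarrow> adj u v"
  shows "(\<exists>y\<in>bdry n. r\<^sup>*\<^sup>* 0 y) \<longleftrightarrow>
         (\<exists>y\<in>bdry n. (\<lambda>u v. r u v \<and> u \<in> ball1 (Suc n) \<and> v \<in> ball1 (Suc n))\<^sup>*\<^sup>* 0 y)"
    (is "?L \<longleftrightarrow> ?R")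
proof
  let ?rB = "\<lambda>u v. r u v \<and> u \<in> ball1 (Suc n) \<and> v \<in> ball1 (Suc n)"
  have inv: "r\<^sup>*\<^sup>* 0 y \<Longrightarrow> (norm1 y \<le> int n \<and> ?rB\<^sup>*\<^sup>* 0 y) \<or> (\<exists>y'\<in>bdry n. ?rB\<^sup>*\<^sup>* 0 y')" for y
  proof (induction rule: rtranclp_induct)
    case base then show ?case by auto
  next
    case (step y z)
    from step.IH show ?case
    proof
      assume h: "norm1 y \<le> int n \<and> ?rB\<^sup>*\<^sup>* 0 y"
      have nz: "norm1 z \<le> int n + 1" using adj_norm[OF r[OF step.hyps(2)]] h by auto
      have "?rB y z" using step.hyps(2) h nz by (auto simp: ball1_def)
      then have "?rB\<^sup>*\<^sup>* 0 z" using h rtranclp.rtrancl_into_rtrancl[of ?rB 0 y z] by blast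
      then show ?thesis using nz by (cases "norm1 z \<le> int n") (auto simp: bdry_iff)
    qed auto
  qed
  assume ?L
  then obtain y where "y \<in> bdry n" "r\<^sup>*\<^sup>* 0 y" by auto
  then show ?R using inv[of y] by (auto simp: bdry_iff)
next
  assume ?R
  then obtain y where y: "y \<in> bdry n" "(\<lambda>u v. r u v \<and> u \<in> ball1 (Suc n) \<and> v \<in> ball1 (Suc n))\<^sup>*\<^sup>* 0 y" by blast
  have "(\<lambda>u v. r u v \<and> u \<in> ball1 (Suc n) \<and> v \<in> ball1 (Suc n)) \<le> r" by auto
  from rtranclp_mono[OF this] y(2) have "r\<^sup>*\<^sup>* 0 y" by (auto simp: le_fun_def)
  then show ?L using y(1) by blast
qed

lemma infinite_reach:
  assumes r: "\<And>u v. r u v \<Longrightarrow> adj u v"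
  shows "infinite {y :: int ^ 'd. r\<^sup>*\<^sup>* 0 y} \<longleftrightarrow> (\<forall>n. \<exists>y\<in>bdry n. r\<^sup>*\<^sup>* 0 y)"
proof
  assume inf: "infinite {y :: int ^ 'd. r\<^sup>*\<^sup>* 0 y}"
  show "\<forall>n. \<exists>y\<in>bdry n. r\<^sup>*\<^sup>* 0 y"
  proof
    fix n
    have "\<not> {y. r\<^sup>*\<^sup>* 0 y} \<subseteq> ball1 n" using inf finite_subset finite_ball1 by blast
    then obtain y where "r\<^sup>*\<^sup>* 0 y" "norm1 y > int n" by (auto simp: ball1_def subset_iff not_le)
    from mid_reach[OF r this(1), of "int n + 1"] this(2) obtain y' where "r\<^sup>*\<^sup>* 0 y'" "norm1 y' = int n + 1"
      by auto
    then show "\<exists>y\<in>bdry n. r\<^sup>*\<^sup>* 0 y" by (auto simp: bdry_iff)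
  qed
next
  assume all: "\<forall>n. \<exists>y\<in>bdry n. r\<^sup>*\<^sup>* 0 y"
  show "infinite {y :: int ^ 'd. r\<^sup>*\<^sup>* 0 y}"
  proof
    assume fin: "finite {y :: int ^ 'd. r\<^sup>*\<^sup>* 0 y}"
    define N where "N = Max (insert 0 (norm1 ` {y. r\<^sup>*\<^sup>* 0 y}))"
    have le: "r\<^sup>*\<^sup>* 0 y \<Longrightarrow> norm1 y \<le> N" for y unfolding N_def using fin by (intro Max_ge) auto
    have "0 \<le> N" unfolding N_def using fin by (intro Max_ge) auto
    from all obtain y where "y \<in> bdry (nat N)" "r\<^sup>*\<^sup>* 0 y" by blast
    then show False using le[of y] \<open>0 \<le> N\<close> by (auto simp: bdry_iff)
  qed
qed

lemma reach_dec:
  assumes r: "\<And>u v. r u v \<Longrightarrow> adj u v"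
  shows "(\<exists>y\<in>bdry (Suc n). r\<^sup>*\<^sup>* 0 y) \<Longrightarrow> (\<exists>y\<in>bdry n. r\<^sup>*\<^sup>* 0 y)"
proof -
  assume "\<exists>y\<in>bdry (Suc n). r\<^sup>*\<^sup>* 0 y"
  then obtain y where "r\<^sup>*\<^sup>* 0 y" "norm1 y = int n + 2" by (auto simp: bdry_iff)
  from mid_reach[OF r this(1), of "int n + 1"] this(2) obtain y' where "r\<^sup>*\<^sup>* 0 y'" "norm1 y' = int n + 1"
    by auto
  then show ?thesis by (auto simp: bdry_iff)
qed




lemma outward: "\<exists>z. adj y z \<and> norm1 z = norm1 (y :: int ^ 'd) + 1"
proof -
  define i0 :: 'd where "i0 = undefined"
  define s :: int where "s = (if y $ i0 \<ge> 0 then 1 else -1)"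
  define z where "z = y + (\<chi> j. if j = i0 then s else 0)"
  have "norm1 (y - z) = (\<Sum>j\<in>UNIV. if j = i0 then \<bar>s\<bar> else 0)"
    unfolding norm1_def z_def by (intro sum.cong) auto
  also have "\<dots> = 1" by (simp add: s_def)
  finally have a: "adj y z" unfolding adj_def .
  have "norm1 z = (\<Sum>j\<in>UNIV. \<bar>y $ j\<bar> + (if j = i0 then 1 else 0))"
    unfolding norm1_def z_def by (intro sum.cong) (auto simp: s_def)
  also have "\<dots> = norm1 y + 1" unfolding norm1_def by (simp add: sum.distrib)
  finally show ?thesis using a by blast
qed

lemma aon_adj: "(\<lambda>u v. adj u v \<and> \<omega> u) u v \<Longrightarrow> adj u v" by simp
lemma site_adj: "(\<lambda>u v. adj u v \<and> \<omega> u \<and> \<omega> v) u v \<Longrightarrow> adj u v" by simp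

lemma aon_site_open:
  assumes "aon_reach \<omega> 0 z" "\<omega> z" shows "site_conn \<omega> 0 z"
  using assms unfolding aon_reach_def
proof (induction rule: rtranclp_induct)
  case base then show ?case by (simp add: site_conn_def)
next
  case (step y z)
  then have "site_conn \<omega> 0 y" by simp
  then have "(\<lambda>u v. adj u v \<and> \<omega> u \<and> \<omega> v)\<^sup>*\<^sup>* 0 y" "\<omega> 0" unfolding site_conn_def by auto
  moreover have "(\<lambda>u v. adj u v \<and> \<omega> u \<and> \<omega> v) y z" using step by auto
  ultimately show ?case using step.prems unfolding site_conn_def
    using rtranclp.rtrancl_into_rtrancl[of "\<lambda>u v. adj u v \<and> \<omega> u \<and> \<omega> v" 0 y z] by auto
qed

lemma aon_last:
  assumes "aon_reach \<omega> 0 z" shows "z = 0 \<or> (\<exists>w. site_conn \<omega> 0 w \<and> adj w z)"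
  using assms unfolding aon_reach_def
proof (cases rule: rtranclp.cases)
  case (rtrancl_into_rtrancl w)
  then have "site_conn \<omega> 0 w" using aon_site_open[of \<omega> w] unfolding aon_reach_def by simp
  then show ?thesis using rtrancl_into_rtrancl by auto
qed simp

lemma site_aon: "site_conn \<omega> 0 y \<Longrightarrow> aon_reach \<omega> 0 y"
proof -
  assume "site_conn \<omega> 0 y"
  then have a: "(\<lambda>u v. adj u v \<and> \<omega> u \<and> \<omega> v)\<^sup>*\<^sup>* 0 y" unfolding site_conn_def by simp
  have b: "(\<lambda>u v. adj u v \<and> \<omega> u \<and> \<omega> v) \<le> (\<lambda>u v. adj u v \<and> \<omega> u)" by auto
  from rtranclp_mono[OF b] a show ?thesis unfolding aon_reach_def by (auto simp: le_fun_def)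
qed

lemma site_open_end:
  assumes "(\<lambda>u v. adj u v \<and> \<omega> u \<and> \<omega> v)\<^sup>*\<^sup>* 0 y" "\<omega> 0" shows "\<omega> y"
  using assms(1) by (cases rule: rtranclp.cases) (use assms(2) in auto)

lemma claim1_sets:
  "(\<exists>y\<in>bdry (Suc n). aon_reach \<omega> 0 (y :: int ^ 'd)) \<longleftrightarrow> (\<exists>y\<in>bdry n. site_conn \<omega> 0 (y :: int ^ 'd))"
proof
  assume "\<exists>y\<in>bdry (Suc n). aon_reach \<omega> 0 (y :: int ^ 'd)"
  then obtain y :: "int ^ 'd" where y0: "y \<in> bdry (Suc n)" "aon_reach \<omega> 0 y" by blast
  then have y: "norm1 y = int n + 2" "aon_reach \<omega> 0 y" by (auto simp: bdry_iff)
  then have "y \<noteq> 0" by auto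
  with aon_last[OF y(2)] obtain w where w: "site_conn \<omega> 0 w" "adj w y" by auto
  have "norm1 w \<ge> int n + 1" using adj_norm[OF w(2)] y(1) by auto
  from w(1) have p: "(\<lambda>u v. adj u v \<and> \<omega> u \<and> \<omega> v)\<^sup>*\<^sup>* 0 w" "\<omega> 0" unfolding site_conn_def by auto
  have sa: "\<And>u v. (\<lambda>u v. adj u v \<and> \<omega> u \<and> \<omega> v) u v \<Longrightarrow> adj u v" by simp
  from mid_reach[OF sa p(1), where k="int n + 1"] \<open>norm1 w \<ge> int n + 1\<close>
  obtain y' where y': "(\<lambda>u v. adj u v \<and> \<omega> u \<and> \<omega> v)\<^sup>*\<^sup>* 0 y'" "norm1 y' = int n + 1" by auto
  have "site_conn \<omega> 0 y'" unfolding site_conn_def using y'(1) p(2) site_open_end[OF y'(1) p(2)] by auto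
  then show "\<exists>y\<in>bdry n. site_conn \<omega> 0 y" using y'(2) by (auto simp: bdry_iff)
next
  assume "\<exists>y\<in>bdry n. site_conn \<omega> 0 (y :: int ^ 'd)"
  then obtain y :: "int ^ 'd" where y: "norm1 y = int n + 1" "site_conn \<omega> 0 y" by (auto simp: bdry_iff)
  obtain z where z: "adj y z" "norm1 z = norm1 y + 1" using outward by blast
  have "aon_reach \<omega> 0 z"
    using site_aon[OF y(2)] z(1) y(2) unfolding aon_reach_def site_conn_def
    using rtranclp.rtrancl_into_rtrancl[of "\<lambda>u v. adj u v \<and> \<omega> u" 0 y z] by auto
  then show "\<exists>y\<in>bdry (Suc n). aon_reach \<omega> 0 (y :: int ^ 'd)" using z(2) y(1) by (auto simp: bdry_iff)
qed

lemma finite_nbrs: "finite {z. adj w (z :: int ^ 'd)}"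
proof -
  have "{z. adj w z} \<subseteq> ball1 (nat (norm1 w + 1))"
  proof
    fix z assume "z \<in> {z. adj w z}"
    then have "norm1 z \<le> norm1 w + 1" using adj_norm[of w z] by auto
    moreover have "0 \<le> norm1 w" by (rule norm1_nonneg)
    ultimately show "z \<in> ball1 (nat (norm1 w + 1))" by (simp add: ball1_def)
  qed
  then show ?thesis using finite_ball1 finite_subset by blast
qed

lemma claim2_sets:
  "infinite {y :: int ^ 'd. site_conn \<omega> 0 y} \<longleftrightarrow> infinite {y :: int ^ 'd. aon_reach \<omega> 0 y}"
proof
  assume "infinite {y :: int ^ 'd. site_conn \<omega> 0 y}"
  moreover have "{y :: int ^ 'd. site_conn \<omega> 0 y} \<subseteq> {y. aon_reach \<omega> 0 y}" using site_aon by auto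
  ultimately show "infinite {y :: int ^ 'd. aon_reach \<omega> 0 y}" using finite_subset by blast
next
  assume inf: "infinite {y :: int ^ 'd. aon_reach \<omega> 0 y}"
  show "infinite {y :: int ^ 'd. site_conn \<omega> 0 y}"
  proof
    assume fin: "finite {y :: int ^ 'd. site_conn \<omega> 0 y}"
    have "{y :: int ^ 'd. aon_reach \<omega> 0 y} \<subseteq> insert 0 (\<Union>w\<in>{y. site_conn \<omega> 0 y}. {z. adj w z})"
    proof
      fix y assume "y \<in> {y :: int ^ 'd. aon_reach \<omega> 0 y}"
      then have "y = 0 \<or> (\<exists>w. site_conn \<omega> 0 w \<and> adj w y)" using aon_last by auto
      then show "y \<in> insert 0 (\<Union>w\<in>{y. site_conn \<omega> 0 y}. {z. adj w z})" by auto
    qed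
    moreover have "finite (insert 0 (\<Union>w\<in>{y :: int ^ 'd. site_conn \<omega> 0 y}. {z. adj w z}))"
      using fin finite_nbrs by (intro finite.insertI finite_UN_I) auto
    ultimately show False using inf finite_subset by blast
  qed
qed




lemma lim_inf:
  fixes R :: "'w \<Rightarrow> int ^ 'd \<Rightarrow> int ^ 'd \<Rightarrow> bool"
  assumes P: "prob_space M" and r: "\<And>\<omega> u v. R \<omega> u v \<Longrightarrow> adj u v"
    and meas: "\<And>n. {\<omega>\<in>space M. \<exists>y\<in>bdry n. (R \<omega>)\<^sup>*\<^sup>* 0 y} \<in> sets M"
  shows "(\<lambda>n. measure M {\<omega>\<in>space M. \<exists>y\<in>bdry n. (R \<omega>)\<^sup>*\<^sup>* 0 y})
     \<longlonglongrightarrow> measure M {\<omega>\<in>space M. infinite {y :: int ^ 'd. (R \<omega>)\<^sup>*\<^sup>* 0 y}}"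
proof -
  interpret prob_space M by (rule P)
  define A where "A n = {\<omega>\<in>space M. \<exists>y\<in>bdry n. (R \<omega>)\<^sup>*\<^sup>* 0 y}" for n
  have d: "decseq A"
  proof (rule decseq_SucI)
    fix n show "A (Suc n) \<subseteq> A n"
    proof
      fix \<omega> assume "\<omega> \<in> A (Suc n)"
      moreover have "\<And>u v. R \<omega> u v \<Longrightarrow> adj u v" by (rule r)
      ultimately show "\<omega> \<in> A n" unfolding A_def using reach_dec[of "R \<omega>" n] by blast
    qed
  qed
  have rA: "range A \<subseteq> sets M" using meas unfolding A_def by auto
  have "(\<lambda>n. measure M (A n)) \<longlonglongrightarrow> measure M (\<Inter>i. A i)"
    by (rule finite_Lim_measure_decseq[OF rA d])
  moreover have "(\<Inter>i. A i) = {\<omega>\<in>space M. infinite {y :: int ^ 'd. (R \<omega>)\<^sup>*\<^sup>* 0 y}}"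
  proof -
    have "\<And>\<omega>. infinite {y :: int ^ 'd. (R \<omega>)\<^sup>*\<^sup>* 0 y} \<longleftrightarrow> (\<forall>n. \<exists>y\<in>bdry n. (R \<omega>)\<^sup>*\<^sup>* 0 y)"
      by (rule infinite_reach) (rule r)
    then show ?thesis unfolding A_def by auto
  qed
  ultimately show ?thesis unfolding A_def by simp
qed

definition Bn :: "nat \<Rightarrow> (int ^ 'd) set" where "Bn n = ball1 (Suc n)"
definition En :: "nat \<Rightarrow> ((int ^ 'd) \<times> (int ^ 'd)) set" where
  "En n = {(u, v). adj u v \<and> u \<in> Bn n \<and> v \<in> Bn n}"

definition QA :: "nat \<Rightarrow> (int ^ 'd \<Rightarrow> bool) \<Rightarrow> bool" where
  "QA n z = (\<exists>t\<in>bdry n. (\<lambda>u v. (u, v) \<in> En n \<and> z u)\<^sup>*\<^sup>* 0 t)"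
definition QU :: "nat \<Rightarrow> ((int ^ 'd) set \<Rightarrow> bool) \<Rightarrow> bool" where
  "QU n z = (\<exists>t\<in>bdry n. (\<lambda>u v. (u, v) \<in> En n \<and> z {u, v})\<^sup>*\<^sup>* 0 t)"

lemma finite_En: "finite (En n)"
proof -
  have "En n \<subseteq> Bn n \<times> Bn n" unfolding En_def by auto
  moreover have "finite (Bn n :: (int ^ 'd) set)" unfolding Bn_def by (rule finite_ball1)
  ultimately show ?thesis using finite_subset by blast
qed

lemma aon_event:
  assumes p: "0 \<le> p" "p \<le> 1"
  shows "{\<omega>\<in>space (vertex_ps p). \<exists>y\<in>bdry n. aon_reach \<omega> 0 (y :: int ^ 'd)} \<in> sets (vertex_ps p)"
    "measure (vertex_ps p) {\<omega>\<in>space (vertex_ps p). \<exists>y\<in>bdry n. aon_reach \<omega> 0 (y :: int ^ 'd)}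
      = PP p (Bn n :: (int ^ 'd) set) (QA n)"
proof -
  have eq: "(\<exists>y\<in>bdry n. aon_reach \<omega> 0 (y :: int ^ 'd)) \<longleftrightarrow>
      QA n (restrict \<omega> (Bn n))" for \<omega>
  proof -
    have "(\<lambda>u v. (u, v) \<in> En n \<and> restrict \<omega> (Bn n) u) =
        (\<lambda>u v. (adj u v \<and> \<omega> u) \<and> u \<in> ball1 (Suc n) \<and> v \<in> ball1 (Suc n))"
      unfolding En_def Bn_def by (auto simp: fun_eq_iff)
    then show ?thesis unfolding aon_reach_def QA_def
      using local_reach[of "\<lambda>u v. adj u v \<and> \<omega> u" n] by simp
  qed
  have s: "{\<omega>\<in>space (vertex_ps p). \<exists>y\<in>bdry n. aon_reach \<omega> 0 (y :: int ^ 'd)} =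
     {\<omega>\<in>space (PiM UNIV (\<lambda>_. measure_pmf (bernoulli_pmf p))).
        QA n (restrict \<omega> (Bn n))}"
    unfolding vertex_ps_def eq ..
  have fB: "finite (Bn n :: (int ^ 'd) set)" unfolding Bn_def by (rule finite_ball1)
  show "{\<omega>\<in>space (vertex_ps p). \<exists>y\<in>bdry n. aon_reach \<omega> 0 (y :: int ^ 'd)} \<in> sets (vertex_ps p)"
    unfolding s unfolding vertex_ps_def by (rule PiM_cyl(1)[OF fB _ p]) simp
  show "measure (vertex_ps p) {\<omega>\<in>space (vertex_ps p). \<exists>y\<in>bdry n. aon_reach \<omega> 0 (y :: int ^ 'd)}
      = PP p (Bn n :: (int ^ 'd) set) (QA n)"
    unfolding s unfolding vertex_ps_def by (rule PiM_cyl(2)[OF fB _ p]) simp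
qed

lemma dir_event:
  assumes p: "0 \<le> p" "p \<le> 1"
  shows "{\<omega>\<in>space (dir_bond_ps p). \<exists>y\<in>bdry n. dir_reach \<omega> 0 (y :: int ^ 'd)} \<in> sets (dir_bond_ps p)"
    "measure (dir_bond_ps p) {\<omega>\<in>space (dir_bond_ps p). \<exists>y\<in>bdry n. dir_reach \<omega> 0 (y :: int ^ 'd)}
      = PP p (En n :: ((int ^ 'd) \<times> (int ^ 'd)) set) (Rch (En n) 0 (bdry n))"
proof -
  have eq: "(\<exists>y\<in>bdry n. dir_reach \<omega> 0 (y :: int ^ 'd)) \<longleftrightarrow> Rch (En n) 0 (bdry n) (restrict \<omega> (En n))" for \<omega>
  proof -
    have "rel (En n) (restrict \<omega> (En n)) =
        (\<lambda>u v. (adj u v \<and> \<omega> (u, v)) \<and> u \<in> ball1 (Suc n) \<and> v \<in> ball1 (Suc n))"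
      unfolding En_def Bn_def rel_def by (auto simp: fun_eq_iff)
    then show ?thesis unfolding dir_reach_def Rch_def
      using local_reach[of "\<lambda>u v. adj u v \<and> \<omega> (u, v)" n] by simp
  qed
  have s: "{\<omega>\<in>space (dir_bond_ps p). \<exists>y\<in>bdry n. dir_reach \<omega> 0 (y :: int ^ 'd)} =
     {\<omega>\<in>space (PiM {(u, v). adj u v} (\<lambda>_. measure_pmf (bernoulli_pmf p))).
        Rch (En n) 0 (bdry n) (restrict \<omega> (En n))}"
    unfolding dir_bond_ps_def eq ..
  have sub: "En n \<subseteq> {(u, v). adj u v}" unfolding En_def by auto
  show "{\<omega>\<in>space (dir_bond_ps p). \<exists>y\<in>bdry n. dir_reach \<omega> 0 (y :: int ^ 'd)} \<in> sets (dir_bond_ps p)"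
    unfolding s unfolding dir_bond_ps_def by (rule PiM_cyl(1)[OF finite_En sub p])
  show "measure (dir_bond_ps p) {\<omega>\<in>space (dir_bond_ps p). \<exists>y\<in>bdry n. dir_reach \<omega> 0 (y :: int ^ 'd)}
      = PP p (En n :: ((int ^ 'd) \<times> (int ^ 'd)) set) (Rch (En n) 0 (bdry n))"
    unfolding s unfolding dir_bond_ps_def by (rule PiM_cyl(2)[OF finite_En sub p])
qed

lemma undir_event:
  assumes p: "0 \<le> p" "p \<le> 1"
  shows "{\<omega>\<in>space (undir_bond_ps p). \<exists>y\<in>bdry n. bond_conn \<omega> 0 (y :: int ^ 'd)} \<in> sets (undir_bond_ps p)"
    "measure (undir_bond_ps p) {\<omega>\<in>space (undir_bond_ps p). \<exists>y\<in>bdry n. bond_conn \<omega> 0 (y :: int ^ 'd)}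
      = PP p ((\<lambda>(u, v). {u, v}) ` (En n :: ((int ^ 'd) \<times> (int ^ 'd)) set)) (QU n)"
proof -
  let ?J = "(\<lambda>(u, v). {u, v}) ` En n"
  have eq: "(\<exists>y\<in>bdry n. bond_conn \<omega> 0 (y :: int ^ 'd)) \<longleftrightarrow>
     QU n (restrict \<omega> ?J)" for \<omega>
  proof -
    have "(\<lambda>u v. (u, v) \<in> En n \<and> restrict \<omega> ?J {u, v}) =
        (\<lambda>u v. (adj u v \<and> \<omega> {u, v}) \<and> u \<in> ball1 (Suc n) \<and> v \<in> ball1 (Suc n))"
      unfolding En_def Bn_def by (auto simp: fun_eq_iff image_iff)
    then show ?thesis unfolding bond_conn_def QU_def
      using local_reach[of "\<lambda>u v. adj u v \<and> \<omega> {u, v}" n] by simp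
  qed
  have s: "{\<omega>\<in>space (undir_bond_ps p). \<exists>y\<in>bdry n. bond_conn \<omega> 0 (y :: int ^ 'd)} =
     {\<omega>\<in>space (PiM {{u, v} | u v. adj u v} (\<lambda>_. measure_pmf (bernoulli_pmf p))).
        QU n (restrict \<omega> ?J)}"
    unfolding undir_bond_ps_def eq ..
  have sub: "?J \<subseteq> {{u, v} | u v. adj u v}" unfolding En_def by auto
  have fJ: "finite ?J" by (rule finite_imageI[OF finite_En])
  show "{\<omega>\<in>space (undir_bond_ps p). \<exists>y\<in>bdry n. bond_conn \<omega> 0 (y :: int ^ 'd)} \<in> sets (undir_bond_ps p)"
    unfolding s unfolding undir_bond_ps_def by (rule PiM_cyl(1)[OF fJ sub p])
  show "measure (undir_bond_ps p) {\<omega>\<in>space (undir_bond_ps p). \<exists>y\<in>bdry n. bond_conn \<omega> 0 (y :: int ^ 'd)}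
      = PP p (?J :: (int ^ 'd) set set) (QU n)"
    unfolding s unfolding undir_bond_ps_def by (rule PiM_cyl(2)[OF fJ sub p])
qed




theorem mainTheorem8:
  fixes p :: real and n :: nat
  assumes "0 < p" "p < 1"
  shows "(measure (vertex_ps p)
           {\<omega> \<in> space (vertex_ps p). \<exists>y \<in> (bdry (Suc n) :: (int ^ 'd) set). aon_reach \<omega> 0 y}
       = measure (vertex_ps p)
           {\<omega> \<in> space (vertex_ps p). \<exists>y \<in> (bdry n :: (int ^ 'd) set). site_conn \<omega> 0 y})
     \<and> (measure (vertex_ps p)
           {\<omega> \<in> space (vertex_ps p). infinite {y :: int ^ 'd. site_conn \<omega> 0 y}}
       = measure (vertex_ps p)
           {\<omega> \<in> space (vertex_ps p). infinite {y :: int ^ 'd. aon_reach \<omega> 0 y}})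
     \<and> (measure (vertex_ps p)
           {\<omega> \<in> space (vertex_ps p). infinite {y :: int ^ 'd. aon_reach \<omega> 0 y}}
       \<le> measure (dir_bond_ps p)
           {\<omega> \<in> space (dir_bond_ps p). infinite {y :: int ^ 'd. dir_reach \<omega> 0 y}})
     \<and> (measure (dir_bond_ps p)
           {\<omega> \<in> space (dir_bond_ps p). infinite {y :: int ^ 'd. dir_reach \<omega> 0 y}}
       = measure (undir_bond_ps p)
           {\<omega> \<in> space (undir_bond_ps p). infinite {y :: int ^ 'd. bond_conn \<omega> 0 y}})"
proof (intro conjI)
  have p: "0 \<le> p" "p \<le> 1" using assms by auto
  show "measure (vertex_ps p)
           {\<omega> \<in> space (vertex_ps p). \<exists>y \<in> (bdry (Suc n) :: (int ^ 'd) set). aon_reach \<omega> 0 y}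
       = measure (vertex_ps p)
           {\<omega> \<in> space (vertex_ps p). \<exists>y \<in> (bdry n :: (int ^ 'd) set). site_conn \<omega> 0 y}"
  proof -
    have "{\<omega> \<in> space (vertex_ps p). \<exists>y \<in> (bdry (Suc n) :: (int ^ 'd) set). aon_reach \<omega> 0 y}
      = {\<omega> \<in> space (vertex_ps p). \<exists>y \<in> (bdry n :: (int ^ 'd) set). site_conn \<omega> 0 y}"
      using claim1_sets[of n] by blast
    then show ?thesis by simp
  qed
  show "measure (vertex_ps p)
           {\<omega> \<in> space (vertex_ps p). infinite {y :: int ^ 'd. site_conn \<omega> 0 y}}
       = measure (vertex_ps p)
           {\<omega> \<in> space (vertex_ps p). infinite {y :: int ^ 'd. aon_reach \<omega> 0 y}}"
  proof -
    have "{\<omega> \<in> space (vertex_ps p). infinite {y :: int ^ 'd. site_conn \<omega> 0 y}}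
      = {\<omega> \<in> space (vertex_ps p). infinite {y :: int ^ 'd. aon_reach \<omega> 0 y}}"
      using claim2_sets by blast
    then show ?thesis by simp
  qed
  have P1: "prob_space (vertex_ps p)" unfolding vertex_ps_def
    by (rule prob_space_PiM) (rule prob_space_measure_pmf)
  have P2: "prob_space (dir_bond_ps p)" unfolding dir_bond_ps_def
    by (rule prob_space_PiM) (rule prob_space_measure_pmf)
  have P3: "prob_space (undir_bond_ps p)" unfolding undir_bond_ps_def
    by (rule prob_space_PiM) (rule prob_space_measure_pmf)
  have La: "(\<lambda>k. measure (vertex_ps p) {\<omega>\<in>space (vertex_ps p). \<exists>y\<in>bdry k. (\<lambda>u v. adj u v \<and> \<omega> u)\<^sup>*\<^sup>* 0 (y :: int ^ 'd)})
     \<longlonglongrightarrow> measure (vertex_ps p) {\<omega>\<in>space (vertex_ps p). infinite {y :: int ^ 'd. (\<lambda>u v. adj u v \<and> \<omega> u)\<^sup>*\<^sup>* 0 y}}"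
    by (rule lim_inf[OF P1, where R="\<lambda>\<omega> u v. adj u v \<and> \<omega> u"]) (auto intro: aon_event(1)[OF p, unfolded aon_reach_def])
  have Ld: "(\<lambda>k. measure (dir_bond_ps p) {\<omega>\<in>space (dir_bond_ps p). \<exists>y\<in>bdry k. (\<lambda>u v. adj u v \<and> \<omega> (u, v))\<^sup>*\<^sup>* 0 (y :: int ^ 'd)})
     \<longlonglongrightarrow> measure (dir_bond_ps p) {\<omega>\<in>space (dir_bond_ps p). infinite {y :: int ^ 'd. (\<lambda>u v. adj u v \<and> \<omega> (u, v))\<^sup>*\<^sup>* 0 y}}"
    by (rule lim_inf[OF P2, where R="\<lambda>\<omega> u v. adj u v \<and> \<omega> (u, v)"]) (auto intro: dir_event(1)[OF p, unfolded dir_reach_def])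
  have Lu: "(\<lambda>k. measure (undir_bond_ps p) {\<omega>\<in>space (undir_bond_ps p). \<exists>y\<in>bdry k. (\<lambda>u v. adj u v \<and> \<omega> {u, v})\<^sup>*\<^sup>* 0 (y :: int ^ 'd)})
     \<longlonglongrightarrow> measure (undir_bond_ps p) {\<omega>\<in>space (undir_bond_ps p). infinite {y :: int ^ 'd. (\<lambda>u v. adj u v \<and> \<omega> {u, v})\<^sup>*\<^sup>* 0 y}}"
    by (rule lim_inf[OF P3, where R="\<lambda>\<omega> u v. adj u v \<and> \<omega> {u, v}"]) (auto intro: undir_event(1)[OF p, unfolded bond_conn_def])
  have Esub: "En k \<subseteq> Bn k \<times> Bn k" for k unfolding En_def by auto
  have fB: "finite (Bn k :: (int ^ 'd) set)" for k unfolding Bn_def by (rule finite_ball1)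
  have le: "measure (vertex_ps p) {\<omega>\<in>space (vertex_ps p). \<exists>y\<in>bdry k. (\<lambda>u v. adj u v \<and> \<omega> u)\<^sup>*\<^sup>* 0 (y :: int ^ 'd)}
      \<le> measure (dir_bond_ps p) {\<omega>\<in>space (dir_bond_ps p). \<exists>y\<in>bdry k. (\<lambda>u v. adj u v \<and> \<omega> (u, v))\<^sup>*\<^sup>* 0 (y :: int ^ 'd)}" for k
  proof -
    have "QA k = (\<lambda>z :: int ^ 'd \<Rightarrow> bool. \<exists>t\<in>bdry k. (\<lambda>u v. (u, v) \<in> En k \<and> z u)\<^sup>*\<^sup>* 0 t)" by (simp add: QA_def fun_eq_iff)
    then have "PP p (Bn k :: (int ^ 'd) set) (QA k) \<le> PP p (En k :: ((int ^ 'd) \<times> (int ^ 'd)) set) (Rch (En k) 0 (bdry k))"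
      using aon_le_dir[OF fB[of k] Esub[of k] p, of "bdry k" 0] by simp
    moreover have "measure (vertex_ps p) {\<omega>\<in>space (vertex_ps p). \<exists>y\<in>bdry k. (\<lambda>u v. adj u v \<and> \<omega> u)\<^sup>*\<^sup>* 0 (y :: int ^ 'd)}
        = PP p (Bn k :: (int ^ 'd) set) (QA k)"
      using aon_event(2)[OF p, of k] unfolding aon_reach_def .
    moreover have "measure (dir_bond_ps p) {\<omega>\<in>space (dir_bond_ps p). \<exists>y\<in>bdry k. (\<lambda>u v. adj u v \<and> \<omega> (u, v))\<^sup>*\<^sup>* 0 (y :: int ^ 'd)}
        = PP p (En k :: ((int ^ 'd) \<times> (int ^ 'd)) set) (Rch (En k) 0 (bdry k))"
      using dir_event(2)[OF p, of k] unfolding dir_reach_def .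
    ultimately show ?thesis by linarith
  qed
  have eq: "measure (undir_bond_ps p) {\<omega>\<in>space (undir_bond_ps p). \<exists>y\<in>bdry k. (\<lambda>u v. adj u v \<and> \<omega> {u, v})\<^sup>*\<^sup>* 0 (y :: int ^ 'd)}
      = measure (dir_bond_ps p) {\<omega>\<in>space (dir_bond_ps p). \<exists>y\<in>bdry k. (\<lambda>u v. adj u v \<and> \<omega> (u, v))\<^sup>*\<^sup>* 0 (y :: int ^ 'd)}" for k
  proof -
    have "QU k = (\<lambda>z :: (int ^ 'd) set \<Rightarrow> bool. \<exists>t\<in>bdry k. (\<lambda>u v. (u, v) \<in> En k \<and> z {u, v})\<^sup>*\<^sup>* 0 t)" by (simp add: QU_def fun_eq_iff)
    moreover have sy: "\<And>u v. (u, v) \<in> (En k :: ((int ^ 'd) \<times> (int ^ 'd)) set) \<Longrightarrow> (v, u) \<in> En k" unfolding En_def by (auto intro: adj_sym)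
    moreover have ir: "\<And>u v. (u, v) \<in> (En k :: ((int ^ 'd) \<times> (int ^ 'd)) set) \<Longrightarrow> u \<noteq> v" unfolding En_def by (auto dest: adj_irrefl)
    ultimately have "PP p ((\<lambda>(u, v). {u, v}) ` (En k :: ((int ^ 'd) \<times> (int ^ 'd)) set)) (QU k) = PP p (En k :: ((int ^ 'd) \<times> (int ^ 'd)) set) (Rch (En k) 0 (bdry k))"
      using undir_eq_dir[OF finite_En[of k] sy ir p, of "bdry k" 0] by simp
    moreover have "measure (undir_bond_ps p) {\<omega>\<in>space (undir_bond_ps p). \<exists>y\<in>bdry k. (\<lambda>u v. adj u v \<and> \<omega> {u, v})\<^sup>*\<^sup>* 0 (y :: int ^ 'd)}
        = PP p ((\<lambda>(u, v). {u, v}) ` (En k :: ((int ^ 'd) \<times> (int ^ 'd)) set)) (QU k)"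
      using undir_event(2)[OF p, of k] unfolding bond_conn_def .
    moreover have "measure (dir_bond_ps p) {\<omega>\<in>space (dir_bond_ps p). \<exists>y\<in>bdry k. (\<lambda>u v. adj u v \<and> \<omega> (u, v))\<^sup>*\<^sup>* 0 (y :: int ^ 'd)}
        = PP p (En k :: ((int ^ 'd) \<times> (int ^ 'd)) set) (Rch (En k) 0 (bdry k))"
      using dir_event(2)[OF p, of k] unfolding dir_reach_def .
    ultimately show ?thesis by linarith
  qed
  show "measure (vertex_ps p)
           {\<omega> \<in> space (vertex_ps p). infinite {y :: int ^ 'd. aon_reach \<omega> 0 y}}
       \<le> measure (dir_bond_ps p)
           {\<omega> \<in> space (dir_bond_ps p). infinite {y :: int ^ 'd. dir_reach \<omega> 0 y}}"
    unfolding aon_reach_def dir_reach_def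
    by (rule LIMSEQ_le[OF La Ld]) (use le in auto)
  have "(\<lambda>k. measure (dir_bond_ps p) {\<omega>\<in>space (dir_bond_ps p). \<exists>y\<in>bdry k. (\<lambda>u v. adj u v \<and> \<omega> (u, v))\<^sup>*\<^sup>* 0 (y :: int ^ 'd)})
     \<longlonglongrightarrow> measure (undir_bond_ps p) {\<omega>\<in>space (undir_bond_ps p). infinite {y :: int ^ 'd. (\<lambda>u v. adj u v \<and> \<omega> {u, v})\<^sup>*\<^sup>* 0 y}}"
    using Lu eq by simp
  from LIMSEQ_unique[OF Ld this]
  show "measure (dir_bond_ps p)
           {\<omega> \<in> space (dir_bond_ps p). infinite {y :: int ^ 'd. dir_reach \<omega> 0 y}}
       = measure (undir_bond_ps p)
           {\<omega> \<in> space (undir_bond_ps p). infinite {y :: int ^ 'd. bond_conn \<omega> 0 y}}"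
    unfolding dir_reach_def bond_conn_def .
qed


end
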